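(* For any integers $n\ge3$ and $1\le m\le(n-1)^2$, letting $d_n$ denote the in-degree of vertex $n$ in $\mathbb G(n,m)$, the graph $\mathbb G(n-1,m-d_n)$ is well defined and equals the subgraph of $\mathbb G(n,m)$ induced by the vertex subset $\{1,\dots,n-1\}$.
   Context: For integers $n\ge2$ and $0\le m\le n(n-1)$, $\mathbb G(n,m)$ is the simple directed graph on vertex set $\{1,\dots,n\}$ whose arc set is $\{(\lceil \frac{i}{n-1}\rceil,\ n-((i-1)\bmod n)) : i=1,\dots,m\}$, where an arc $(j,k)$ goes from $j$ to $k$ and $a\bmod b\in\{0,\dots,b-1\}$; these $m$ pairs are pairwise distinct pairs of distinct vertices. The subgraph induced by a vertex subset $S$ has vertex set $S$ and all arcs of the graph with both endpoints in $S$. *)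

theory Defs
  imports Complex_Main
begin

text \<open>A digraph is represented as a pair (vertex set, arc set); an arc (j,k) goes from j to k.\<close>

definition GG :: "nat \<Rightarrow> nat \<Rightarrow> nat set \<times> (nat \<times> nat) set" where
  "GG n m = ({1..n},
     {(nat \<lceil>real i / real (n - 1)\<rceil>, n - ((i - 1) mod n)) | i. i \<in> {1..m}})"

definition induced_subgraph :: "'a set \<times> ('a \<times> 'a) set \<Rightarrow> 'a set \<Rightarrow> 'a set \<times> ('a \<times> 'a) set" where
  "induced_subgraph G S = (S, {(j, k). (j, k) \<in> snd G \<and> j \<in> S \<and> k \<in> S})"

definition in_degree :: "'a set \<times> ('a \<times> 'a) set \<Rightarrow> 'a \<Rightarrow> nat" where
  "in_degree G v = card {u. (u, v) \<in> snd G}"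

definition GG_wd :: "nat \<Rightarrow> nat \<Rightarrow> bool" where
  "GG_wd n m \<longleftrightarrow> 2 \<le> n \<and> m \<le> n * (n - 1)"

end

theory Submission imports Defs begin
lemma ceil_div:
  assumes "i \<ge> 1" "N \<ge> 1"
  shows "nat \<lceil>real i / real N\<rceil> = (i - 1) div N + 1"
proof -
  define q where "q = (i-1) div N"
  define r where "r = (i-1) mod N"
  have i: "i = q*N + r + 1" using assms unfolding q_def r_def by simp
  have r: "r < N" using assms unfolding r_def by simp
  have "\<lceil>real i / real N\<rceil> = int q + 1"
  proof (rule ceiling_unique)
    have "real i = real q * real N + real r + 1" using i by simp
    then show "real_of_int (int q + 1) - 1 < real i / real N" using assms
      by (simp add: field_simps)
    have "real r + 1 \<le> real N" using r by linarith
    then show "real i / real N \<le> real_of_int (int q + 1)" using assms \<open>real i = _\<close>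
      by (simp add: field_simps)
  qed
  then show ?thesis unfolding q_def by simp
qed

lemma arcs:
  assumes "n \<ge> 2"
  shows "snd (GG n m) = (\<lambda>k. (k div (n-1) + 1, n - k mod n)) ` {..<m}"
proof -
  have "snd (GG n m) = (\<lambda>i. (nat \<lceil>real i / real (n - 1)\<rceil>, n - ((i - 1) mod n))) ` {1..m}"
    unfolding GG_def by auto
  also have "\<dots> = (\<lambda>i. ((i-1) div (n-1) + 1, n - ((i - 1) mod n))) ` {1..m}"
  proof (rule image_cong[OF refl])
    fix i assume "i \<in> {1..m}"
    then have "nat \<lceil>real i / real (n-1)\<rceil> = (i-1) div (n-1) + 1"
      using assms by (intro ceil_div) auto
    then show "(nat \<lceil>real i / real (n - 1)\<rceil>, n - ((i - 1) mod n)) = ((i-1) div (n-1) + 1, n - ((i - 1) mod n))" by simp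
  qed
  also have "\<dots> = (\<lambda>k. (k div (n-1) + 1, n - k mod n)) ` ((\<lambda>i. i - 1) ` {1..m})"
    by (simp add: image_image)
  also have "(\<lambda>i. i - 1) ` {1..m} = {..<m}"
    by (auto simp: image_iff intro!: bexI[where x="Suc _"])
  finally show ?thesis .
qed

lemma dm_nat: "c < b \<Longrightarrow> (a*b + c) div (b::nat) = a"
  by simp

lemma mm_nat: "c < b \<Longrightarrow> (a*b + c) mod (b::nat) = c"
  by simp

lemma src:
  fixes N k :: nat
  assumes "N \<ge> 2" "k < N*N" "k mod Suc N \<noteq> 0"
  shows "(k - k div Suc N - 1) div (N-1) = k div N"
    and "(k - k div Suc N - 1) mod N = k mod Suc N - 1"
proof -
  obtain M where M: "N = Suc M" "M \<ge> 1" using assms(1) by (cases N) auto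
  define q where "q = k div Suc N"
  define r where "r = k mod Suc N"
  have k: "k = q * Suc N + r" unfolding q_def r_def by (metis div_mult_mod_eq)
  have r: "1 \<le> r" "r \<le> N" using assms(3) unfolding r_def
    by (auto simp: less_Suc_eq_le[symmetric])
  obtain s where s: "r = Suc s" using r by (cases r) auto
  have k': "k - k div Suc N - 1 = q * N + s" using k s unfolding q_def[symmetric] by simp
  show "(k - k div Suc N - 1) mod N = k mod Suc N - 1"
    unfolding k' r_def[symmetric] using r s by simp
  have qlt: "q < N"
  proof (rule ccontr)
    assume "\<not> q < N"
    then have "N * Suc N \<le> q * Suc N" by (intro mult_le_mono1) simp
    then show False using k assms(2) by (simp add: algebra_simps)
  qed
  have qr: "q + s < 2 * M"
  proof (rule ccontr)
    assume "\<not> q + s < 2 * M"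
    then have "q = M" "s = M" using qlt r s M by auto
    then have "k = M * Suc (Suc M) + Suc M" using k s M by simp
    then show False using assms M by (simp add: algebra_simps)
  qed
  have k'2: "q * N + s = q * M + (q + s)" using M by simp
  show "(k - k div Suc N - 1) div (N-1) = k div N"
  proof (cases "q + s < M")
    case True
    have "k = q * N + (q + Suc s)" using k s by simp
    then have "k div N = q" using True M by (metis dm_nat add_Suc_right less_SucI add_Suc_right Suc_less_eq)
    moreover have "(k - k div Suc N - 1) div (N-1) = q" unfolding k' k'2 using True M by (metis dm_nat diff_Suc_1)
    ultimately show ?thesis by simp
  next
    case False
    have "k = (q+1) * N + (q + s - M)" using k False s M by simp
    moreover have "q + s - M < N" using qr M by simp
    ultimately have "k div N = q + 1" by (metis dm_nat)
    have "q * N + s = (q+1) * M + (q + s - M)" using False M by simp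
    moreover have "q + s - M < M" using qr False by simp
    ultimately have "(k - k div Suc N - 1) div (N-1) = q + 1" unfolding k' using M by (metis dm_nat diff_Suc_1)
    then show ?thesis using \<open>k div N = q + 1\<close> by simp
  qed
qed

lemma lex:
  fixes b q s Q R :: nat
  assumes "s < b" "R \<le> b"
  shows "q*b + s < Q*b + R \<longleftrightarrow> (q < Q \<or> (q = Q \<and> s < R))"
proof (cases "q < Q")
  case True
  then have "Suc q * b \<le> Q * b" by (intro mult_le_mono1) simp
  then show ?thesis using True assms by simp
next
  case False
  show ?thesis
  proof (cases "q = Q")
    case False
    with \<open>\<not> q < Q\<close> have "Suc Q * b \<le> q * b" by (intro mult_le_mono1) simp
    then show ?thesis using False \<open>\<not> q < Q\<close> assms by simp
  qed simp
qed

lemma bound: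
  fixes N k m :: nat
  assumes "m \<ge> 1" "k mod Suc N \<noteq> 0"
  shows "k < m \<longleftrightarrow> k - k div Suc N - 1 < m - ((m-1) div Suc N + 1)"
proof -
  define q where "q = k div Suc N"
  define r where "r = k mod Suc N"
  have k: "k = q * Suc N + r" unfolding q_def r_def by (metis div_mult_mod_eq)
  have r: "1 \<le> r" "r \<le> N" using assms(2) unfolding r_def
    by (auto simp: less_Suc_eq_le[symmetric])
  obtain s where s: "r = Suc s" using r by (cases r) auto
  define Q where "Q = (m - 1) div Suc N"
  define R where "R = (m - 1) mod Suc N"
  have m: "m = Q * Suc N + R + 1" unfolding Q_def R_def using assms(1) by (metis div_mult_mod_eq le_add_diff_inverse2)
  have R: "R \<le> N" unfolding R_def by (simp add: less_Suc_eq_le[symmetric])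
  have k': "k - k div Suc N - 1 = q * N + s" using k s unfolding q_def[symmetric] by simp
  have md: "m - ((m-1) div Suc N + 1) = Q * N + R" using m unfolding Q_def[symmetric] by simp
  have "k < m \<longleftrightarrow> q * Suc N + s < Q * Suc N + R" using k m s by simp
  also have "\<dots> \<longleftrightarrow> (q < Q \<or> (q = Q \<and> s < R))" using r s R by (intro lex) auto
  also have "\<dots> \<longleftrightarrow> q * N + s < Q * N + R" using r s R by (intro lex[symmetric]) auto
  finally show ?thesis unfolding k' md .
qed

theorem lemma16:
  fixes n m :: nat
  assumes "n \<ge> 3" and "1 \<le> m" and "m \<le> (n - 1)^2"
  shows "in_degree (GG n m) n \<le> m
       \<and> GG_wd (n - 1) (m - in_degree (GG n m) n)
       \<and> GG (n - 1) (m - in_degree (GG n m) n) = induced_subgraph (GG n m) {1..n - 1}"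
proof -
  obtain N where n: "n = Suc N" and N2: "N \<ge> 2" using assms(1) by (cases n) auto
  have mN: "m \<le> N * N" using assms(3) n by (simp add: power2_eq_square)
  define d where "d = (m - 1) div Suc N + 1"
  define f where "f = (\<lambda>k. (k div N + 1, Suc N - k mod Suc N))"
  define g where "g = (\<lambda>k. (k div (N - 1) + 1, N - k mod N))"
  have A: "snd (GG n m) = f ` {..<m}" unfolding f_def using arcs[of n m] n N2 by simp
  have B: "snd (GG N (m - d)) = g ` {..<m - d}" unfolding g_def using arcs[of N "m-d"] N2 by simp
  have indeg: "in_degree (GG n m) n = d"
  proof -
    have "{u. (u, n) \<in> snd (GG n m)} = (\<lambda>t. t * Suc N div N + 1) ` {..<d}"
    proof (intro set_eqI iffI)
      fix u assume "u \<in> {u. (u, n) \<in> snd (GG n m)}"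
      then have "(u, n) \<in> f ` {..<m}" using A by simp
      then obtain k where k: "k < m" "u = k div N + 1" "Suc N - k mod Suc N = Suc N"
        unfolding f_def n by auto
      then have "k mod Suc N = 0" using mod_less_divisor[of "Suc N" k] by linarith
      then have kk: "k = (k div Suc N) * Suc N" by (metis div_mult_mod_eq add_0_right)
      have "k div Suc N \<le> (m - 1) div Suc N" using k(1) by (intro div_le_mono) simp
      then have "k div Suc N < d" unfolding d_def by simp
      then show "u \<in> (\<lambda>t. t * Suc N div N + 1) ` {..<d}" using k(2) kk
        by (intro image_eqI[where x="k div Suc N"]) auto
    next
      fix u assume "u \<in> (\<lambda>t. t * Suc N div N + 1) ` {..<d}"
      then obtain t where t: "t < d" "u = t * Suc N div N + 1" by auto
      then have "t \<le> (m - 1) div Suc N" unfolding d_def by simp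
      then have "t * Suc N \<le> m - 1" using less_eq_div_iff_mult_less_eq by simp
      then have "t * Suc N < m" using assms(2) by linarith
      moreover have "f (t * Suc N) = (u, n)"
      proof -
        have z: "t * Suc N mod Suc N = 0" by (metis mod_mult_self1_is_0 mult.commute mod_mult_self2_is_0)
        show ?thesis unfolding f_def n using t by (simp only: z diff_zero prod.inject)
      qed
      ultimately have "(u, n) \<in> f ` {..<m}" by (auto intro!: image_eqI[where x="t * Suc N"])
      then show "u \<in> {u. (u, n) \<in> snd (GG n m)}" using A by simp
    qed
    moreover have "inj_on (\<lambda>t. t * Suc N div N + 1) {..<d}"
    proof (rule strict_mono_imp_inj_on, rule strict_monoI)
      fix a b :: nat assume "a < b"
      have e: "x * Suc N div N = x + x div N" for x using N2 by (simp add: algebra_simps)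
      have "a div N \<le> b div N" using \<open>a < b\<close> by (intro div_le_mono) simp
      then show "a * Suc N div N + 1 < b * Suc N div N + 1" unfolding e using \<open>a < b\<close> by simp
    qed
    ultimately show ?thesis unfolding in_degree_def by (simp add: card_image)
  qed
  have dm: "d \<le> m" using assms(2) div_le_dividend[of "m-1" "Suc N"] unfolding d_def by linarith
  have wd: "GG_wd N (m - d)"
  proof -
    obtain M where M: "N = Suc M" using N2 by (cases N) auto
    define Q where "Q = (m - 1) div Suc N"
    define R where "R = (m - 1) mod Suc N"
    have m: "m = Q * Suc N + R + 1" unfolding Q_def R_def using assms(2) by (metis div_mult_mod_eq le_add_diff_inverse2)
    have R: "R \<le> N" unfolding R_def by (simp add: less_Suc_eq_le[symmetric])
    have md: "m - d = Q * N + R" using m unfolding d_def Q_def[symmetric] by simp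
    have NN: "N * N = M * Suc N + 1" using M by (simp add: algebra_simps)
    have QM: "Q \<le> M"
    proof (rule ccontr)
      assume "\<not> Q \<le> M"
      then have "Suc M * Suc N \<le> Q * Suc N" by (intro mult_le_mono1) simp
      then show False using m mN NN M by simp
    qed
    have "Q * N + R \<le> N * M"
    proof (cases "Q = M")
      case True
      then have "R = 0" using m mN NN by simp
      then show ?thesis using True by simp
    next
      case False
      then have "Suc Q * N \<le> M * N" using QM by (intro mult_le_mono1) simp
      then show ?thesis using R by (simp add: algebra_simps)
    qed
    then show ?thesis unfolding GG_wd_def md using N2 M by simp
  qed
  have key: "g (k - k div Suc N - 1) = f k \<and> fst (f k) \<in> {1..N} \<and> snd (f k) \<in> {1..N}"
    if "k < m" "k mod Suc N \<noteq> 0" for k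
  proof -
    have kN: "k < N * N" using that mN by simp
    have r: "1 \<le> k mod Suc N" "k mod Suc N \<le> N" using that(2) mod_less_divisor[of "Suc N" k] by linarith+
    have "k div N < N" using kN N2 by (metis div_less_iff_less_mult gr0I not_numeral_le_zero)
    moreover have "g (k - k div Suc N - 1) = f k"
      unfolding g_def f_def using src[OF N2 kN that(2)] r by simp
    moreover have "1 \<le> Suc N - k mod Suc N \<and> Suc N - k mod Suc N \<le> N" using r by linarith
    ultimately show ?thesis unfolding f_def by simp
  qed
  have ind: "g ` {..<m - d} = {(j, k). (j, k) \<in> f ` {..<m} \<and> j \<in> {1..N} \<and> k \<in> {1..N}}"
  proof (intro set_eqI iffI)
    fix x assume "x \<in> g ` {..<m - d}"
    then obtain k' where k': "k' < m - d" "x = g k'" by auto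
    define k where "k = k' div N * Suc N + (k' mod N + 1)"
    have lt: "k' mod N + 1 < Suc N" using N2 by simp
    have km: "k mod Suc N = k' mod N + 1" unfolding k_def by (rule mm_nat[OF lt])
    have kd: "k div Suc N = k' div N" unfolding k_def by (rule dm_nat[OF lt])
    have k'e: "k' = k' div N * N + k' mod N" by simp
    have "k = k' + k' div N + 1" unfolding k_def by (subst (2) k'e) simp
    then have kk: "k - k div Suc N - 1 = k'" unfolding kd by simp
    have nz: "k mod Suc N \<noteq> 0" using km by simp
    have "k < m" using bound[OF assms(2) nz] k'(1) kk unfolding d_def by simp
    then show "x \<in> {(j, k). (j, k) \<in> f ` {..<m} \<and> j \<in> {1..N} \<and> k \<in> {1..N}}"
      using key[OF _ nz] k'(2) kk by (auto simp: prod_eq_iff)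
  next
    fix x assume "x \<in> {(j, k). (j, k) \<in> f ` {..<m} \<and> j \<in> {1..N} \<and> k \<in> {1..N}}"
    then have "x \<in> f ` {..<m}" "snd x \<le> N" by (auto simp del: f_def) (metis snd_conv)
    then obtain k where k: "k < m" "x = f k" "snd (f k) \<le> N" by auto
    then have nz: "k mod Suc N \<noteq> 0" unfolding f_def by auto
    have "k - k div Suc N - 1 < m - d" using bound[OF assms(2) nz] k(1) unfolding d_def by simp
    then show "x \<in> g ` {..<m - d}" using key[OF k(1) nz] k(2) by (auto intro!: image_eqI[where x="k - k div Suc N - 1"])
  qed
  show ?thesis
    using indeg dm wd ind A B n unfolding induced_subgraph_def
    by (simp add: prod_eq_iff GG_def)
qed

end
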